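(* Forward-safe and backward-safe pairs are closed under the following constructions: (1) if $(f_1,g_1)$ and $(f_2,g_2)$ are forward-safe (resp. backward-safe) then so is $(f_1\times f_2,g_1\times g_2)$; (2) if each $(f_i,g_i)$ is forward-safe (resp. backward-safe) then so is $(\coprod_i f_i,\coprod_i g_i)$; (3) if $f:X\to Y$, $g:Y\to W$ form a forward-safe (resp. backward-safe) pair then so does $(\mathcal V\times f,\ \theta_W\circ(\mathcal V\times g))$, where $\mathcal V\times f:\mathcal V\times X\to\mathcal V\times Y$ and $\theta_W\circ(\mathcal V\times g):\mathcal V\times Y\to[\mathcal V]W$.
   Context: Nominal sets over a countably infinite set $\mathcal V$ of names; $\theta_W:\mathcal V\times W\to[\mathcal V]W$, $(x,u)\mapsto\langle x\rangle u$, the quotient map onto the name-abstraction. For equivariant $f:X\to Y$: $u$ is $f$-safe if $|\mathsf{supp}(u)|=\max\{|\mathsf{supp}(v)|:v\in f^{-1}(f(u))\}$ (maximum existing); $f$ is safe if every element of $Y$ has an $f$-safe preimage. For safe maps $f:X\to Y$, $g:Y\to W$: $(f,g)$ is forward-safe if for every $(g\circ f)$-safe $u\in X$, $f(u)$ is $g$-safe; $(f,g)$ is backward-safe if every $u\in X$ which is $f$-safe and such that $f(u)$ is $g$-safe is $(g\circ f)$-safe. *)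

theory Defs
  imports Main
begin

text \<open>Names: the countably infinite set \<V> is modelled by the type nat.
  Finitely supported permutations of names act on nominal sets.\<close>

definition fperm :: "(nat \<Rightarrow> nat) \<Rightarrow> bool" where
  "fperm p \<longleftrightarrow> bij p \<and> finite {a. p a \<noteq> a}"

definition swp :: "nat \<Rightarrow> nat \<Rightarrow> nat \<Rightarrow> nat" where
  "swp a b = (\<lambda>x. if x = a then b else if x = b then a else x)"

record 'a nomset =
  carrier :: "'a set"
  act :: "(nat \<Rightarrow> nat) \<Rightarrow> 'a \<Rightarrow> 'a"

definition supports :: "'a nomset \<Rightarrow> nat set \<Rightarrow> 'a \<Rightarrow> bool" where
  "supports X A x \<longleftrightarrow> (\<forall>p. fperm p \<and> (\<forall>a\<in>A. p a = a) \<longrightarrow> act X p x = x)"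

definition supp :: "'a nomset \<Rightarrow> 'a \<Rightarrow> nat set" where
  "supp X x = \<Inter>{A. finite A \<and> supports X A x}"

definition nominal :: "'a nomset \<Rightarrow> bool" where
  "nominal X \<longleftrightarrow>
     (\<forall>x\<in>carrier X. act X id x = x) \<and>
     (\<forall>p q x. fperm p \<longrightarrow> fperm q \<longrightarrow> x \<in> carrier X \<longrightarrow> act X (p \<circ> q) x = act X p (act X q x)) \<and>
     (\<forall>p x. fperm p \<longrightarrow> x \<in> carrier X \<longrightarrow> act X p x \<in> carrier X) \<and>
     (\<forall>x\<in>carrier X. \<exists>A. finite A \<and> supports X A x)"

definition equivariant :: "'a nomset \<Rightarrow> 'b nomset \<Rightarrow> ('a \<Rightarrow> 'b) \<Rightarrow> bool" where
  "equivariant X Y f \<longleftrightarrow>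
     (\<forall>x\<in>carrier X. f x \<in> carrier Y) \<and>
     (\<forall>p x. fperm p \<longrightarrow> x \<in> carrier X \<longrightarrow> f (act X p x) = act Y p (f x))"

definition safe_elem :: "'a nomset \<Rightarrow> ('a \<Rightarrow> 'b) \<Rightarrow> 'a \<Rightarrow> bool" where
  "safe_elem X f u \<longleftrightarrow> u \<in> carrier X \<and>
     (\<forall>v\<in>carrier X. f v = f u \<longrightarrow> card (supp X v) \<le> card (supp X u))"

definition safe_map :: "'a nomset \<Rightarrow> 'b nomset \<Rightarrow> ('a \<Rightarrow> 'b) \<Rightarrow> bool" where
  "safe_map X Y f \<longleftrightarrow> (\<forall>y\<in>carrier Y. \<exists>u. safe_elem X f u \<and> f u = y)"

definition forward_safe ::
  "'a nomset \<Rightarrow> 'b nomset \<Rightarrow> 'c nomset \<Rightarrow> ('a \<Rightarrow> 'b) \<Rightarrow> ('b \<Rightarrow> 'c) \<Rightarrow> bool" where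
  "forward_safe X Y W f g \<longleftrightarrow> safe_map X Y f \<and> safe_map Y W g \<and>
     (\<forall>u. safe_elem X (g \<circ> f) u \<longrightarrow> safe_elem Y g (f u))"

definition backward_safe ::
  "'a nomset \<Rightarrow> 'b nomset \<Rightarrow> 'c nomset \<Rightarrow> ('a \<Rightarrow> 'b) \<Rightarrow> ('b \<Rightarrow> 'c) \<Rightarrow> bool" where
  "backward_safe X Y W f g \<longleftrightarrow> safe_map X Y f \<and> safe_map Y W g \<and>
     (\<forall>u. safe_elem X f u \<and> safe_elem Y g (f u) \<longrightarrow> safe_elem X (g \<circ> f) u)"

definition prod_nom :: "'a nomset \<Rightarrow> 'b nomset \<Rightarrow> ('a \<times> 'b) nomset" where
  "prod_nom X Y = \<lparr>carrier = carrier X \<times> carrier Y,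
                   act = (\<lambda>p (x, y). (act X p x, act Y p y))\<rparr>"

definition coprod_nom :: "'i set \<Rightarrow> ('i \<Rightarrow> 'a nomset) \<Rightarrow> ('i \<times> 'a) nomset" where
  "coprod_nom I X = \<lparr>carrier = Sigma I (\<lambda>i. carrier (X i)),
                     act = (\<lambda>p (i, x). (i, act (X i) p x))\<rparr>"

definition coprod_map :: "('i \<Rightarrow> 'a \<Rightarrow> 'b) \<Rightarrow> 'i \<times> 'a \<Rightarrow> 'i \<times> 'b" where
  "coprod_map f = (\<lambda>(i, x). (i, f i x))"

definition names_nom :: "nat nomset" where
  "names_nom = \<lparr>carrier = UNIV, act = (\<lambda>p a. p a)\<rparr>"

text \<open>Name abstraction: the class of (a,x) under alpha-equivalence
  (a,x) ~ (b,y) iff (a c).x = (b c).y for some c fresh for a,x,b,y.\<close>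
definition nabs :: "'a nomset \<Rightarrow> nat \<Rightarrow> 'a \<Rightarrow> (nat \<times> 'a) set" where
  "nabs W a x = {(b, y). y \<in> carrier W \<and>
     (\<exists>c. c \<noteq> a \<and> c \<noteq> b \<and> c \<notin> supp W x \<and> c \<notin> supp W y \<and>
          act W (swp a c) x = act W (swp b c) y)}"

definition abs_nom :: "'a nomset \<Rightarrow> (nat \<times> 'a) set nomset" where
  "abs_nom W = \<lparr>carrier = {nabs W a x | a x. x \<in> carrier W},
                act = (\<lambda>p S. (\<lambda>(b, y). (p b, act W p y)) ` S)\<rparr>"

definition theta :: "'a nomset \<Rightarrow> nat \<times> 'a \<Rightarrow> (nat \<times> 'a) set" where
  "theta W = (\<lambda>(a, x). nabs W a x)"

definition names_map :: "('a \<Rightarrow> 'b) \<Rightarrow> nat \<times> 'a \<Rightarrow> nat \<times> 'b" where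
  "names_map f = (\<lambda>(a, x). (a, f x))"

end

theory Submission
  imports Defs
begin


lemma swp_swp[simp]: "swp a b (swp a b x) = x"
  by (simp add: swp_def)

lemma swp_comp_self: "swp a b \<circ> swp a b = id"
  by (rule ext) simp

lemma fperm_id: "fperm id"
  by (simp add: fperm_def)

lemma fperm_swp: "fperm (swp a b)"
proof -
  have "bij (swp a b)" using o_bij[OF swp_comp_self swp_comp_self] .
  moreover have "{x. swp a b x \<noteq> x} \<subseteq> {a, b}" by (auto simp: swp_def)
  hence "finite {x. swp a b x \<noteq> x}" by (rule finite_subset) simp
  ultimately show ?thesis by (simp add: fperm_def)
qed

lemma fperm_comp: "fperm p \<Longrightarrow> fperm q \<Longrightarrow> fperm (p \<circ> q)"
proof -
  assume p: "fperm p" and q: "fperm q"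
  have "{x. (p \<circ> q) x \<noteq> x} \<subseteq> {x. p x \<noteq> x} \<union> {x. q x \<noteq> x}" by auto
  hence "finite {x. (p \<circ> q) x \<noteq> x}" using p q by (auto simp: fperm_def intro: finite_subset)
  thus ?thesis using p q by (simp add: fperm_def bij_comp)
qed

lemma fperm_inv: "fperm p \<Longrightarrow> fperm (inv p)"
proof -
  assume p: "fperm p"
  hence b: "bij p" by (simp add: fperm_def)
  have "{x. inv p x \<noteq> x} \<subseteq> p ` {x. p x \<noteq> x}"
  proof
    fix x assume "x \<in> {x. inv p x \<noteq> x}"
    hence h: "inv p x \<noteq> x" by simp
    have e: "p (inv p x) = x" using b by (simp add: bij_is_surj surj_f_inv_f)
    show "x \<in> p ` {x. p x \<noteq> x}"
      using h e by (metis (mono_tags, lifting) image_eqI mem_Collect_eq)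
  qed
  hence "finite {x. inv p x \<noteq> x}" using p by (auto simp: fperm_def intro: finite_subset)
  thus ?thesis using b by (simp add: fperm_def bij_imp_bij_inv)
qed

lemma nom_id: "nominal X \<Longrightarrow> x \<in> carrier X \<Longrightarrow> act X id x = x"
  by (simp add: nominal_def)
lemma nom_comp: "nominal X \<Longrightarrow> fperm p \<Longrightarrow> fperm q \<Longrightarrow> x \<in> carrier X \<Longrightarrow> act X (p \<circ> q) x = act X p (act X q x)"
  by (simp add: nominal_def)
lemma nom_closed: "nominal X \<Longrightarrow> fperm p \<Longrightarrow> x \<in> carrier X \<Longrightarrow> act X p x \<in> carrier X"
  by (simp add: nominal_def)

lemma swap_fix: "supports X A x \<Longrightarrow> a \<notin> A \<Longrightarrow> b \<notin> A \<Longrightarrow> act X (swp a b) x = x"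
proof -
  assume s: "supports X A x" and a: "a \<notin> A" and b: "b \<notin> A"
  have "\<forall>z\<in>A. swp a b z = z" using a b by (auto simp: swp_def)
  thus ?thesis using s fperm_swp unfolding supports_def by blast
qed

lemma swaps_support:
  assumes nom: "nominal X" and x: "x \<in> carrier X"
    and sw: "\<And>a b. a \<notin> C \<Longrightarrow> b \<notin> C \<Longrightarrow> act X (swp a b) x = x"
  shows "supports X C x"
proof -
  have main: "\<forall>p. fperm p \<and> (\<forall>a\<in>C. p a = a) \<and> card {a. p a \<noteq> a} = n \<longrightarrow> act X p x = x" for n
  proof (induction n rule: less_induct)
    case (less n)
    show ?case
    proof (intro allI impI)
      fix p assume H: "fperm p \<and> (\<forall>a\<in>C. p a = a) \<and> card {a. p a \<noteq> a} = n"
      hence bp: "bij p" and fin: "finite {a. p a \<noteq> a}" and fixC: "\<forall>a\<in>C. p a = a"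
        and cn: "card {a. p a \<noteq> a} = n" by (auto simp: fperm_def)
      have injp: "inj p" using bp bij_is_inj by auto
      show "act X p x = x"
      proof (cases "\<exists>a. p a \<noteq> a")
        case False
        hence "p = id" by auto
        thus ?thesis using nom x by (simp add: nominal_def)
      next
        case True
        then obtain a where pa: "p a \<noteq> a" by blast
        define b where "b = p a"
        define q where "q = swp a b \<circ> p"
        have aC: "a \<notin> C" using fixC pa by auto
        have bC: "b \<notin> C"
        proof
          assume "b \<in> C" then have "p b = b" using fixC by auto
          hence "p b = p a" by (simp add: b_def)
          hence "b = a" using injp by (auto dest: injD)
          thus False using pa b_def by simp
        qed
        have sub: "{z. q z \<noteq> z} \<subseteq> {z. p z \<noteq> z} - {a}"
        proof
          fix z assume "z \<in> {z. q z \<noteq> z}"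
          hence qz: "q z \<noteq> z" by simp
          have za: "z \<noteq> a" using qz pa by (auto simp: q_def swp_def b_def)
          moreover have "p z \<noteq> z"
          proof
            assume pz: "p z = z"
            have "z \<noteq> b"
            proof
              assume "z = b" hence "p b = p a" using pz b_def by simp
              hence "b = a" using injp by (auto dest: injD)
              thus False using pa b_def by simp
            qed
            thus False using qz pz za by (simp add: q_def swp_def)
          qed
          ultimately show "z \<in> {z. p z \<noteq> z} - {a}" by simp
        qed
        have "card ({z. p z \<noteq> z} - {a}) < n" using cn pa fin
        proof -
          have "a \<in> {z. p z \<noteq> z}" using pa by simp
          hence "card {z. p z \<noteq> z} > 0" using fin card_gt_0_iff by blast
          thus ?thesis using cn fin \<open>a \<in> {z. p z \<noteq> z}\<close> by (simp add: card_Diff_singleton)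
        qed
        moreover have "card {z. q z \<noteq> z} \<le> card ({z. p z \<noteq> z} - {a})"
          using sub fin by (intro card_mono) auto
        ultimately have lt: "card {z. q z \<noteq> z} < n" by linarith
        have fq: "fperm q" unfolding q_def using H fperm_swp fperm_comp by blast
        have qC: "\<forall>z\<in>C. q z = z" using fixC aC bC by (auto simp: q_def swp_def)
        have qx: "act X q x = x" using less.IH[OF lt] fq qC by blast
        have pq: "p = swp a b \<circ> q" by (rule ext) (simp add: q_def)
        have "act X p x = act X (swp a b) (act X q x)"
          using pq nom_comp[OF nom fperm_swp fq x] by simp
        also have "\<dots> = x" using qx sw aC bC by simp
        finally show ?thesis .
      qed
    qed
  qed
  show ?thesis unfolding supports_def using main by blast
qed




lemma fresh_nat: "finite (A::nat set) \<Longrightarrow> \<exists>c. c \<notin> A"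
  using ex_new_if_finite[OF infinite_UNIV_nat] by blast

lemma supports_Int:
  assumes nom: "nominal X" and x: "x \<in> carrier X" and fA: "finite A" and fB: "finite B"
    and sA: "supports X A x" and sB: "supports X B x"
  shows "supports X (A \<inter> B) x"
proof (rule swaps_support[OF nom x])
  fix a b assume a: "a \<notin> A \<inter> B" and b: "b \<notin> A \<inter> B"
  show "act X (swp a b) x = x"
  proof (cases "a = b")
    case True
    hence "swp a b = id" by (auto simp: swp_def)
    thus ?thesis using nom_id[OF nom x] by simp
  next
    case False
    obtain c where c: "c \<notin> A \<union> B \<union> {a, b}" using fresh_nat[of "A \<union> B \<union> {a,b}"] fA fB by auto
    have eq: "swp a b = swp a c \<circ> (swp b c \<circ> swp a c)"
      using False c by (auto simp: swp_def fun_eq_iff)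
    have ac: "act X (swp a c) x = x"
      using a c swap_fix[OF sA, of a c] swap_fix[OF sB, of a c] by auto
    have bc: "act X (swp b c) x = x"
      using b c swap_fix[OF sA, of b c] swap_fix[OF sB, of b c] by auto
    have "act X (swp a b) x = act X (swp a c) (act X (swp b c) (act X (swp a c) x))"
      unfolding eq using nom_comp[OF nom fperm_swp fperm_comp[OF fperm_swp fperm_swp] x]
        nom_comp[OF nom fperm_swp fperm_swp x] by simp
    thus ?thesis using ac bc by simp
  qed
qed

lemma supp_least: "finite A \<Longrightarrow> supports X A x \<Longrightarrow> supp X x \<subseteq> A"
  unfolding supp_def by blast

lemma supp_fin_supports:
  assumes nom: "nominal X" and x: "x \<in> carrier X"
  shows "finite (supp X x) \<and> supports X (supp X x) x"
proof -
  let ?F = "{A. finite A \<and> supports X A x}"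
  have "\<forall>x\<in>carrier X. \<exists>A. finite A \<and> supports X A x" using nom unfolding nominal_def by (elim conjE)
  then obtain A0 where "finite A0 \<and> supports X A0 x" using x by blast
  hence "A0 \<in> ?F" by simp
  from ex_has_least_nat[of "\<lambda>A. A \<in> ?F", OF this, of card]
  obtain A where A: "A \<in> ?F" and minA: "\<forall>B. B \<in> ?F \<longrightarrow> card A \<le> card B"
    by blast
  have "supp X x = A"
  proof
    show "supp X x \<subseteq> A" using A supp_least[of A X x] by simp
    show "A \<subseteq> supp X x" unfolding supp_def
    proof (rule Inter_greatest)
      fix B assume B: "B \<in> ?F"
      have "A \<inter> B \<in> ?F" using A B supports_Int[OF nom x] by auto
      hence c1: "card A \<le> card (A \<inter> B)" using minA by blast
      have fA: "finite A" using A by simp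
      have c2: "card (A \<inter> B) \<le> card A" using fA by (intro card_mono) auto
      have "A \<inter> B = A" using card_subset_eq[OF fA Int_lower1] c1 c2 by simp
      thus "A \<subseteq> B" by blast
    qed
  qed
  thus ?thesis using A by simp
qed

lemma supp_fin: "nominal X \<Longrightarrow> x \<in> carrier X \<Longrightarrow> finite (supp X x)"
  by (rule conjunct1[OF supp_fin_supports])
lemma supp_supports: "nominal X \<Longrightarrow> x \<in> carrier X \<Longrightarrow> supports X (supp X x) x"
  by (rule conjunct2[OF supp_fin_supports])

lemma equiv_closed: "equivariant X Y f \<Longrightarrow> x \<in> carrier X \<Longrightarrow> f x \<in> carrier Y"
  by (simp add: equivariant_def)
lemma equiv_act: "equivariant X Y f \<Longrightarrow> fperm p \<Longrightarrow> x \<in> carrier X \<Longrightarrow> f (act X p x) = act Y p (f x)"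
  by (simp add: equivariant_def)

lemma equivariant_comp: "equivariant X Y f \<Longrightarrow> equivariant Y W g \<Longrightarrow> equivariant X W (g \<circ> f)"
proof -
  assume f: "equivariant X Y f" and g: "equivariant Y W g"
  show ?thesis unfolding equivariant_def
  proof (intro conjI allI impI ballI)
    fix x assume x: "x \<in> carrier X"
    show "(g \<circ> f) x \<in> carrier W" using equiv_closed[OF g equiv_closed[OF f x]] by simp
  next
    fix p x assume p: "fperm p" and x: "x \<in> carrier X"
    show "(g \<circ> f) (act X p x) = act W p ((g \<circ> f) x)"
      using equiv_act[OF f p x] equiv_act[OF g p equiv_closed[OF f x]] by simp
  qed
qed

lemma supp_equivariant:
  assumes nom: "nominal X" and f: "equivariant X Y f" and x: "x \<in> carrier X"
  shows "supp Y (f x) \<subseteq> supp X x"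
proof (rule supp_least[OF supp_fin[OF nom x]])
  show "supports Y (supp X x) (f x)" unfolding supports_def
  proof (intro allI impI)
    fix p assume p: "fperm p \<and> (\<forall>a\<in>supp X x. p a = a)"
    have "act X p x = x" using supp_supports[OF nom x] p unfolding supports_def by blast
    thus "act Y p (f x) = f x" using equiv_act[OF f _ x, of p] p by simp
  qed
qed

lemma supp_act_sub:
  assumes nom: "nominal X" and p: "fperm p" and x: "x \<in> carrier X"
  shows "supp X (act X p x) \<subseteq> p ` supp X x"
proof (rule supp_least)
  show "finite (p ` supp X x)" using supp_fin[OF nom x] by simp
  show "supports X (p ` supp X x) (act X p x)" unfolding supports_def
  proof (intro allI impI)
    fix q assume q: "fperm q \<and> (\<forall>a\<in>p ` supp X x. q a = a)"
    have bp: "bij p" using p by (simp add: fperm_def)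
    define r where "r = inv p \<circ> q \<circ> p"
    have fq: "fperm q" using q by simp
    have fr: "fperm r" unfolding r_def using fperm_comp[OF fperm_comp[OF fperm_inv[OF p] fq] p] .
    have rS: "\<forall>a\<in>supp X x. r a = a" using q bp by (simp add: r_def bij_is_inj)
    have rx: "act X r x = x" using supp_supports[OF nom x] fr rS unfolding supports_def by blast
    have qp: "q \<circ> p = p \<circ> r" unfolding r_def using bp
      by (simp add: fun_eq_iff bij_is_surj surj_f_inv_f)
    have "act X q (act X p x) = act X (q \<circ> p) x" using nom_comp[OF nom _ p x, of q] q by simp
    also have "\<dots> = act X (p \<circ> r) x" using qp by simp
    also have "\<dots> = act X p x" using nom_comp[OF nom p fr x] rx by simp
    finally show "act X q (act X p x) = act X p x" .
  qed
qed

lemma supp_act: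
  assumes nom: "nominal X" and p: "fperm p" and x: "x \<in> carrier X"
  shows "supp X (act X p x) = p ` supp X x"
proof
  show "supp X (act X p x) \<subseteq> p ` supp X x" by (rule supp_act_sub[OF assms])
  have bp: "bij p" using p by (simp add: fperm_def)
  have px: "act X p x \<in> carrier X" using nom_closed[OF nom p x] .
  have "act X (inv p) (act X p x) = act X (inv p \<circ> p) x"
    using nom_comp[OF nom fperm_inv[OF p] p x] by simp
  also have "\<dots> = x" using bp nom_id[OF nom x] by (simp add: bij_is_inj)
  finally have e: "act X (inv p) (act X p x) = x" .
  have "supp X x \<subseteq> inv p ` supp X (act X p x)"
    using supp_act_sub[OF nom fperm_inv[OF p] px] e by simp
  hence "p ` supp X x \<subseteq> p ` inv p ` supp X (act X p x)" by blast
  also have "\<dots> = supp X (act X p x)" using bp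
    by (simp add: image_comp bij_is_surj surj_f_inv_f)
  finally show "p ` supp X x \<subseteq> supp X (act X p x)" .
qed

lemma card_supp_act:
  assumes nom: "nominal X" and p: "fperm p" and x: "x \<in> carrier X"
  shows "card (supp X (act X p x)) = card (supp X x)"
proof -
  have "inj p" using p by (simp add: fperm_def bij_is_inj)
  hence "inj_on p (supp X x)" by (rule inj_on_subset) simp
  thus ?thesis using supp_act[OF assms] card_image by metis
qed

lemma perm_away:
  assumes fE: "finite E" and fF: "finite F" and fS: "finite S" and ES: "E \<inter> S = {}"
  shows "\<exists>\<pi>. fperm \<pi> \<and> (\<forall>s\<in>S. \<pi> s = s) \<and> \<pi> ` E \<inter> F = {}"
  using fE ES
proof (induction E rule: finite_induct)
  case empty
  have "fperm id \<and> (\<forall>s\<in>S. id s = s) \<and> id ` {} \<inter> F = {}" using fperm_id by simp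
  thus ?case by blast
next
  case (insert e E)
  have "E \<inter> S = {}" using insert.prems by simp
  then obtain \<pi> where pi: "fperm \<pi>" and piS: "\<forall>s\<in>S. \<pi> s = s" and piE: "\<pi> ` E \<inter> F = {}"
    using insert.IH by blast
  have injpi: "inj \<pi>" using pi by (simp add: fperm_def bij_is_inj)
  have "finite (F \<union> S \<union> \<pi> ` E \<union> {\<pi> e})" using fF fS insert.hyps(1) by simp
  from fresh_nat[OF this] obtain c where c: "c \<notin> F \<union> S \<union> \<pi> ` E \<union> {\<pi> e}" ..
  define \<pi>' where "\<pi>' = swp (\<pi> e) c \<circ> \<pi>"
  have "fperm \<pi>'" unfolding \<pi>'_def using fperm_comp[OF fperm_swp pi] .
  moreover have "\<forall>s\<in>S. \<pi>' s = s"
  proof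
    fix s assume s: "s \<in> S"
    have "s \<noteq> \<pi> e"
    proof
      assume "s = \<pi> e" hence "\<pi> s = \<pi> e" using piS s by simp
      hence "s = e" using injpi by (auto dest: injD)
      thus False using s insert.prems by auto
    qed
    thus "\<pi>' s = s" using s piS c by (auto simp: \<pi>'_def swp_def)
  qed
  moreover have "\<pi>' ` insert e E \<inter> F = {}"
  proof -
    have "\<pi>' e = c" by (simp add: \<pi>'_def swp_def)
    moreover have "\<forall>y\<in>E. \<pi>' y = \<pi> y"
    proof
      fix y assume y: "y \<in> E"
      have "\<pi> y \<noteq> \<pi> e" using injpi y insert.hyps(2) by (auto dest: injD)
      moreover have "\<pi> y \<noteq> c" using c y by auto
      ultimately show "\<pi>' y = \<pi> y" by (simp add: \<pi>'_def swp_def)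
    qed
    ultimately show ?thesis using c piE by auto
  qed
  ultimately show ?case by blast
qed

lemma rename:
  assumes nomX: "nominal X" and nomY: "nominal Y" and h: "equivariant X Y h"
    and x: "x \<in> carrier X" and fF: "finite F"
  shows "\<exists>x'\<in>carrier X. h x' = h x \<and> card (supp X x') = card (supp X x)
           \<and> supp X x' \<inter> F \<subseteq> supp Y (h x)"
proof -
  let ?S = "supp Y (h x)"
  have hx: "h x \<in> carrier Y" using equiv_closed[OF h x] .
  obtain \<pi> where pi: "fperm \<pi>" and piS: "\<forall>s\<in>?S. \<pi> s = s" and piE: "\<pi> ` (supp X x - ?S) \<inter> F = {}"
  proof -
    have "finite (supp X x - ?S)" using supp_fin[OF nomX x] by simp
    moreover have "(supp X x - ?S) \<inter> ?S = {}" by blast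
    ultimately show ?thesis using perm_away[OF _ fF supp_fin[OF nomY hx]] that by blast
  qed
  define x' where "x' = act X \<pi> x"
  have "x' \<in> carrier X" using nom_closed[OF nomX pi x] x'_def by simp
  moreover have "h x' = h x"
  proof -
    have "h x' = act Y \<pi> (h x)" using equiv_act[OF h pi x] x'_def by simp
    also have "\<dots> = h x" using supp_supports[OF nomY hx] pi piS unfolding supports_def by blast
    finally show ?thesis .
  qed
  moreover have "card (supp X x') = card (supp X x)" using card_supp_act[OF nomX pi x] x'_def by simp
  moreover have "supp X x' \<inter> F \<subseteq> ?S"
  proof
    fix z assume z: "z \<in> supp X x' \<inter> F"
    then obtain y where y: "y \<in> supp X x" and zy: "z = \<pi> y" using supp_act[OF nomX pi x] x'_def by auto
    show "z \<in> ?S"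
    proof (cases "y \<in> ?S")
      case True thus ?thesis using zy piS by simp
    next
      case False thus ?thesis using y zy z piE by auto
    qed
  qed
  ultimately show ?thesis by blast
qed




lemma prod_carrier[simp]: "carrier (prod_nom X Y) = carrier X \<times> carrier Y"
  by (simp add: prod_nom_def)
lemma prod_act[simp]: "act (prod_nom X Y) p (x, y) = (act X p x, act Y p y)"
  by (simp add: prod_nom_def)

lemma supports_prod: "supports (prod_nom X Y) A (x, y) \<longleftrightarrow> supports X A x \<and> supports Y A y"
  unfolding supports_def by auto

lemma supports_mono: "supports X A x \<Longrightarrow> A \<subseteq> B \<Longrightarrow> supports X B x"
  unfolding supports_def by blast

lemma supp_prod:
  assumes fx: "finite (supp X x)" and sx: "supports X (supp X x) x"
    and fy: "finite (supp Y y)" and sy: "supports Y (supp Y y) y"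
  shows "supp (prod_nom X Y) (x, y) = supp X x \<union> supp Y y"
proof
  show "supp (prod_nom X Y) (x, y) \<subseteq> supp X x \<union> supp Y y"
  proof (rule supp_least)
    show "finite (supp X x \<union> supp Y y)" using fx fy by simp
    show "supports (prod_nom X Y) (supp X x \<union> supp Y y) (x, y)"
      unfolding supports_prod using supports_mono[OF sx] supports_mono[OF sy] by blast
  qed
  have "supp X x \<subseteq> supp (prod_nom X Y) (x, y)"
    unfolding supp_def by (rule Inter_anti_mono) (auto simp: supports_prod)
  moreover have "supp Y y \<subseteq> supp (prod_nom X Y) (x, y)"
    unfolding supp_def by (rule Inter_anti_mono) (auto simp: supports_prod)
  ultimately show "supp X x \<union> supp Y y \<subseteq> supp (prod_nom X Y) (x, y)" by blast
qed

lemma supp_prod_nom: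
  "nominal X \<Longrightarrow> nominal Y \<Longrightarrow> x \<in> carrier X \<Longrightarrow> y \<in> carrier Y \<Longrightarrow>
   supp (prod_nom X Y) (x, y) = supp X x \<union> supp Y y"
  by (rule supp_prod) (auto intro: supp_fin supp_supports)

lemma safe_elem_rename:
  "safe_elem X h u \<Longrightarrow> u' \<in> carrier X \<Longrightarrow> h u' = h u \<Longrightarrow> card (supp X u') = card (supp X u)
   \<Longrightarrow> safe_elem X h u'"
  unfolding safe_elem_def by simp

lemma one_side:
  assumes nomX: "nominal X" and nomZ: "nominal Z" and h: "equivariant X Z h"
    and u: "u \<in> carrier X" and fB: "finite B"
    and H: "\<forall>v\<in>carrier X. h v = h u \<longrightarrow> card (supp X v \<union> B) \<le> card (supp X u \<union> B)"
  shows "safe_elem X h u \<and> supp X u \<inter> B \<subseteq> supp Z (h u)"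
proof -
  have fu: "finite (supp X u)" using supp_fin[OF nomX u] .
  have hu_sub: "supp Z (h u) \<subseteq> supp X u" using supp_equivariant[OF nomX h u] .
  have eu: "card (supp X u) + card B = card (supp X u \<union> B) + card (supp X u \<inter> B)"
    using card_Un_Int[OF fu fB] .
  have safe: "safe_elem X h u"
    unfolding safe_elem_def
  proof (intro conjI ballI impI u)
    fix v assume v: "v \<in> carrier X" and hv: "h v = h u"
    show "card (supp X v) \<le> card (supp X u)"
    proof (rule ccontr)
      assume "\<not> card (supp X v) \<le> card (supp X u)"
      hence lt: "card (supp X u) < card (supp X v)" by simp
      obtain v' where v': "v' \<in> carrier X" "h v' = h v" "card (supp X v') = card (supp X v)"
        "supp X v' \<inter> B \<subseteq> supp Z (h v)"
        using rename[OF nomX nomZ h v fB] by blast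
      have fv': "finite (supp X v')" using supp_fin[OF nomX v'(1)] .
      have "supp X v' \<inter> B \<subseteq> supp X u \<inter> B" using v'(4) hv hu_sub by auto
      hence c1: "card (supp X v' \<inter> B) \<le> card (supp X u \<inter> B)" using fu by (intro card_mono) auto
      have e1: "card (supp X v') + card B = card (supp X v' \<union> B) + card (supp X v' \<inter> B)"
        using card_Un_Int[OF fv' fB] .
      have "card (supp X v' \<union> B) \<le> card (supp X u \<union> B)" using H v' hv by simp
      thus False using e1 eu c1 lt v'(3) by linarith
    qed
  qed
  moreover have "supp X u \<inter> B \<subseteq> supp Z (h u)"
  proof (rule ccontr)
    assume "\<not> supp X u \<inter> B \<subseteq> supp Z (h u)"
    then obtain a where a: "a \<in> supp X u \<inter> B" "a \<notin> supp Z (h u)" by blast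
    obtain u' where u': "u' \<in> carrier X" "h u' = h u" "card (supp X u') = card (supp X u)"
      "supp X u' \<inter> B \<subseteq> supp Z (h u)"
      using rename[OF nomX nomZ h u fB] by blast
    have fu': "finite (supp X u')" using supp_fin[OF nomX u'(1)] .
    have "supp X u' \<inter> B \<subseteq> (supp X u \<inter> B) - {a}" using u'(4) a hu_sub by auto
    hence "card (supp X u' \<inter> B) \<le> card ((supp X u \<inter> B) - {a})" using fu by (intro card_mono) auto
    also have "\<dots> < card (supp X u \<inter> B)" using fu a(1) by (intro card_Diff1_less) auto
    finally have c1: "card (supp X u' \<inter> B) < card (supp X u \<inter> B)" .
    have e1: "card (supp X u') + card B = card (supp X u' \<union> B) + card (supp X u' \<inter> B)"
      using card_Un_Int[OF fu' fB] .
    have "card (supp X u' \<union> B) \<le> card (supp X u \<union> B)" using H u' by simp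
    thus False using e1 eu c1 u'(3) by linarith
  qed
  ultimately show ?thesis by blast
qed

lemma prod_safe_iff:
  assumes nX1: "nominal X1" and nX2: "nominal X2" and nZ1: "nominal Z1" and nZ2: "nominal Z2"
    and h1: "equivariant X1 Z1 h1" and h2: "equivariant X2 Z2 h2"
  shows "safe_elem (prod_nom X1 X2) (map_prod h1 h2) (u1, u2) \<longleftrightarrow>
    safe_elem X1 h1 u1 \<and> safe_elem X2 h2 u2 \<and>
    supp X1 u1 \<inter> supp X2 u2 \<subseteq> supp Z1 (h1 u1) \<inter> supp Z2 (h2 u2)"
proof
  assume S: "safe_elem (prod_nom X1 X2) (map_prod h1 h2) (u1, u2)"
  hence u1: "u1 \<in> carrier X1" and u2: "u2 \<in> carrier X2" by (auto simp: safe_elem_def)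
  have S': "\<And>v1 v2. v1 \<in> carrier X1 \<Longrightarrow> v2 \<in> carrier X2 \<Longrightarrow> h1 v1 = h1 u1 \<Longrightarrow> h2 v2 = h2 u2 \<Longrightarrow>
     card (supp X1 v1 \<union> supp X2 v2) \<le> card (supp X1 u1 \<union> supp X2 u2)"
  proof -
    fix v1 v2 assume v: "v1 \<in> carrier X1" "v2 \<in> carrier X2" "h1 v1 = h1 u1" "h2 v2 = h2 u2"
    have "card (supp (prod_nom X1 X2) (v1, v2)) \<le> card (supp (prod_nom X1 X2) (u1, u2))"
      using S v unfolding safe_elem_def by auto
    thus "card (supp X1 v1 \<union> supp X2 v2) \<le> card (supp X1 u1 \<union> supp X2 u2)"
      using supp_prod_nom[OF nX1 nX2 v(1,2)] supp_prod_nom[OF nX1 nX2 u1 u2] by simp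
  qed
  have A: "safe_elem X1 h1 u1 \<and> supp X1 u1 \<inter> supp X2 u2 \<subseteq> supp Z1 (h1 u1)"
    using one_side[OF nX1 nZ1 h1 u1 supp_fin[OF nX2 u2]] S' u2 by blast
  have B: "safe_elem X2 h2 u2 \<and> supp X2 u2 \<inter> supp X1 u1 \<subseteq> supp Z2 (h2 u2)"
    using one_side[OF nX2 nZ2 h2 u2 supp_fin[OF nX1 u1]] S'[OF u1] by (simp add: Un_commute)
  show "safe_elem X1 h1 u1 \<and> safe_elem X2 h2 u2 \<and>
    supp X1 u1 \<inter> supp X2 u2 \<subseteq> supp Z1 (h1 u1) \<inter> supp Z2 (h2 u2)" using A B by blast
next
  assume R: "safe_elem X1 h1 u1 \<and> safe_elem X2 h2 u2 \<and>
    supp X1 u1 \<inter> supp X2 u2 \<subseteq> supp Z1 (h1 u1) \<inter> supp Z2 (h2 u2)"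
  hence u1: "u1 \<in> carrier X1" and u2: "u2 \<in> carrier X2" by (auto simp: safe_elem_def)
  show "safe_elem (prod_nom X1 X2) (map_prod h1 h2) (u1, u2)"
    unfolding safe_elem_def
  proof (intro conjI ballI impI)
    show "(u1, u2) \<in> carrier (prod_nom X1 X2)" using u1 u2 by simp
  next
    fix w assume w: "w \<in> carrier (prod_nom X1 X2)" and hw: "map_prod h1 h2 w = map_prod h1 h2 (u1, u2)"
    obtain v1 v2 where wv: "w = (v1, v2)" by (cases w)
    have v1: "v1 \<in> carrier X1" and v2: "v2 \<in> carrier X2" using w wv by auto
    have hv1: "h1 v1 = h1 u1" and hv2: "h2 v2 = h2 u2" using hw wv by auto
    have c1: "card (supp X1 v1) \<le> card (supp X1 u1)" using R v1 hv1 by (auto simp: safe_elem_def)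
    have c2: "card (supp X2 v2) \<le> card (supp X2 u2)" using R v2 hv2 by (auto simp: safe_elem_def)
    have fu1: "finite (supp X1 u1)" using supp_fin[OF nX1 u1] .
    have fu2: "finite (supp X2 u2)" using supp_fin[OF nX2 u2] .
    have fv1: "finite (supp X1 v1)" using supp_fin[OF nX1 v1] .
    have fv2: "finite (supp X2 v2)" using supp_fin[OF nX2 v2] .
    have "supp X1 u1 \<inter> supp X2 u2 \<subseteq> supp X1 v1 \<inter> supp X2 v2"
      using R hv1 hv2 supp_equivariant[OF nX1 h1 v1] supp_equivariant[OF nX2 h2 v2] by auto
    hence c3: "card (supp X1 u1 \<inter> supp X2 u2) \<le> card (supp X1 v1 \<inter> supp X2 v2)"
      using fv1 by (intro card_mono) auto
    have e1: "card (supp X1 v1) + card (supp X2 v2) = card (supp X1 v1 \<union> supp X2 v2) + card (supp X1 v1 \<inter> supp X2 v2)"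
      using card_Un_Int[OF fv1 fv2] .
    have e2: "card (supp X1 u1) + card (supp X2 u2) = card (supp X1 u1 \<union> supp X2 u2) + card (supp X1 u1 \<inter> supp X2 u2)"
      using card_Un_Int[OF fu1 fu2] .
    have "card (supp X1 v1 \<union> supp X2 v2) \<le> card (supp X1 u1 \<union> supp X2 u2)"
      using e1 e2 c1 c2 c3 by linarith
    thus "card (supp (prod_nom X1 X2) w) \<le> card (supp (prod_nom X1 X2) (u1, u2))"
      using wv supp_prod_nom[OF nX1 nX2 v1 v2] supp_prod_nom[OF nX1 nX2 u1 u2] by simp
  qed
qed

lemma prod_safe_map:
  assumes nX1: "nominal X1" and nX2: "nominal X2" and nZ1: "nominal Z1" and nZ2: "nominal Z2"
    and h1: "equivariant X1 Z1 h1" and h2: "equivariant X2 Z2 h2"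
    and s1: "safe_map X1 Z1 h1" and s2: "safe_map X2 Z2 h2"
  shows "safe_map (prod_nom X1 X2) (prod_nom Z1 Z2) (map_prod h1 h2)"
  unfolding safe_map_def
proof
  fix z assume z: "z \<in> carrier (prod_nom Z1 Z2)"
  obtain z1 z2 where zz: "z = (z1, z2)" by (cases z)
  have z1: "z1 \<in> carrier Z1" and z2: "z2 \<in> carrier Z2" using z zz by auto
  obtain u1 where u1: "safe_elem X1 h1 u1" "h1 u1 = z1" using s1 z1 unfolding safe_map_def by blast
  obtain u2 where u2: "safe_elem X2 h2 u2" "h2 u2 = z2" using s2 z2 unfolding safe_map_def by blast
  have cu1: "u1 \<in> carrier X1" and cu2: "u2 \<in> carrier X2" using u1 u2 by (auto simp: safe_elem_def)
  obtain u1' where u1': "u1' \<in> carrier X1" "h1 u1' = h1 u1" "card (supp X1 u1') = card (supp X1 u1)"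
      "supp X1 u1' \<inter> supp X2 u2 \<subseteq> supp Z1 (h1 u1)"
    using rename[OF nX1 nZ1 h1 cu1 supp_fin[OF nX2 cu2]] by blast
  obtain u2' where u2': "u2' \<in> carrier X2" "h2 u2' = h2 u2" "card (supp X2 u2') = card (supp X2 u2)"
      "supp X2 u2' \<inter> supp X1 u1' \<subseteq> supp Z2 (h2 u2)"
    using rename[OF nX2 nZ2 h2 cu2 supp_fin[OF nX1 u1'(1)]] by blast
  have sf1: "safe_elem X1 h1 u1'" using safe_elem_rename[OF u1(1) u1'(1-3)] .
  have sf2: "safe_elem X2 h2 u2'" using safe_elem_rename[OF u2(1) u2'(1-3)] .
  have "supp X1 u1' \<inter> supp X2 u2' \<subseteq> supp Z1 (h1 u1') \<inter> supp Z2 (h2 u2')"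
    using u1'(2,4) u2'(2,4) supp_equivariant[OF nX2 h2 cu2] by auto
  hence "safe_elem (prod_nom X1 X2) (map_prod h1 h2) (u1', u2')"
    using prod_safe_iff[OF nX1 nX2 nZ1 nZ2 h1 h2] sf1 sf2 by blast
  moreover have "map_prod h1 h2 (u1', u2') = z" using zz u1 u2 u1' u2' by simp
  ultimately show "\<exists>u. safe_elem (prod_nom X1 X2) (map_prod h1 h2) u \<and> map_prod h1 h2 u = z" by blast
qed

lemma part1:
  assumes nX1: "nominal X1" and nY1: "nominal Y1" and nW1: "nominal W1"
    and nX2: "nominal X2" and nY2: "nominal Y2" and nW2: "nominal W2"
    and f1: "equivariant X1 Y1 f1" and g1: "equivariant Y1 W1 g1"
    and f2: "equivariant X2 Y2 f2" and g2: "equivariant Y2 W2 g2"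
  shows "(forward_safe X1 Y1 W1 f1 g1 \<and> forward_safe X2 Y2 W2 f2 g2 \<longrightarrow>
         forward_safe (prod_nom X1 X2) (prod_nom Y1 Y2) (prod_nom W1 W2)
           (map_prod f1 f2) (map_prod g1 g2)) \<and>
      (backward_safe X1 Y1 W1 f1 g1 \<and> backward_safe X2 Y2 W2 f2 g2 \<longrightarrow>
         backward_safe (prod_nom X1 X2) (prod_nom Y1 Y2) (prod_nom W1 W2)
           (map_prod f1 f2) (map_prod g1 g2))"
proof -
  have comp: "map_prod g1 g2 \<circ> map_prod f1 f2 = map_prod (g1 \<circ> f1) (g2 \<circ> f2)"
    by (simp add: fun_eq_iff)
  have gf1: "equivariant X1 W1 (g1 \<circ> f1)" using equivariant_comp[OF f1 g1] .
  have gf2: "equivariant X2 W2 (g2 \<circ> f2)" using equivariant_comp[OF f2 g2] .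
  note Pf = prod_safe_iff[OF nX1 nX2 nY1 nY2 f1 f2]
  note Pg = prod_safe_iff[OF nY1 nY2 nW1 nW2 g1 g2]
  note Pgf = prod_safe_iff[OF nX1 nX2 nW1 nW2 gf1 gf2]
  show ?thesis
  proof (intro conjI impI)
    assume A: "forward_safe X1 Y1 W1 f1 g1 \<and> forward_safe X2 Y2 W2 f2 g2"
    show "forward_safe (prod_nom X1 X2) (prod_nom Y1 Y2) (prod_nom W1 W2) (map_prod f1 f2) (map_prod g1 g2)"
      unfolding forward_safe_def
    proof (intro conjI allI impI)
      show "safe_map (prod_nom X1 X2) (prod_nom Y1 Y2) (map_prod f1 f2)"
        using prod_safe_map[OF nX1 nX2 nY1 nY2 f1 f2] A by (simp add: forward_safe_def)
      show "safe_map (prod_nom Y1 Y2) (prod_nom W1 W2) (map_prod g1 g2)"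
        using prod_safe_map[OF nY1 nY2 nW1 nW2 g1 g2] A by (simp add: forward_safe_def)
    next
      fix u assume u: "safe_elem (prod_nom X1 X2) (map_prod g1 g2 \<circ> map_prod f1 f2) u"
      obtain x y where uxy: "u = (x, y)" by (cases u)
      have R: "safe_elem X1 (g1 \<circ> f1) x \<and> safe_elem X2 (g2 \<circ> f2) y \<and>
        supp X1 x \<inter> supp X2 y \<subseteq> supp W1 ((g1 \<circ> f1) x) \<inter> supp W2 ((g2 \<circ> f2) y)"
        using u uxy comp Pgf by simp
      have x: "x \<in> carrier X1" and y: "y \<in> carrier X2" using R by (auto simp: safe_elem_def)
      have s1: "safe_elem Y1 g1 (f1 x)" using A R by (simp add: forward_safe_def)
      have s2: "safe_elem Y2 g2 (f2 y)" using A R by (simp add: forward_safe_def)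
      have "supp Y1 (f1 x) \<inter> supp Y2 (f2 y) \<subseteq> supp W1 (g1 (f1 x)) \<inter> supp W2 (g2 (f2 y))"
        using R supp_equivariant[OF nX1 f1 x] supp_equivariant[OF nX2 f2 y] by auto
      thus "safe_elem (prod_nom Y1 Y2) (map_prod g1 g2) (map_prod f1 f2 u)"
        using Pg s1 s2 uxy by simp
    qed
  next
    assume A: "backward_safe X1 Y1 W1 f1 g1 \<and> backward_safe X2 Y2 W2 f2 g2"
    show "backward_safe (prod_nom X1 X2) (prod_nom Y1 Y2) (prod_nom W1 W2) (map_prod f1 f2) (map_prod g1 g2)"
      unfolding backward_safe_def
    proof (intro conjI allI impI)
      show "safe_map (prod_nom X1 X2) (prod_nom Y1 Y2) (map_prod f1 f2)"
        using prod_safe_map[OF nX1 nX2 nY1 nY2 f1 f2] A by (simp add: backward_safe_def)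
      show "safe_map (prod_nom Y1 Y2) (prod_nom W1 W2) (map_prod g1 g2)"
        using prod_safe_map[OF nY1 nY2 nW1 nW2 g1 g2] A by (simp add: backward_safe_def)
    next
      fix u assume u: "safe_elem (prod_nom X1 X2) (map_prod f1 f2) u \<and>
        safe_elem (prod_nom Y1 Y2) (map_prod g1 g2) (map_prod f1 f2 u)"
      obtain x y where uxy: "u = (x, y)" by (cases u)
      have R1: "safe_elem X1 f1 x \<and> safe_elem X2 f2 y \<and>
        supp X1 x \<inter> supp X2 y \<subseteq> supp Y1 (f1 x) \<inter> supp Y2 (f2 y)"
        using u uxy Pf by simp
      have R2: "safe_elem Y1 g1 (f1 x) \<and> safe_elem Y2 g2 (f2 y) \<and>
        supp Y1 (f1 x) \<inter> supp Y2 (f2 y) \<subseteq> supp W1 (g1 (f1 x)) \<inter> supp W2 (g2 (f2 y))"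
        using u uxy Pg by simp
      have s1: "safe_elem X1 (g1 \<circ> f1) x" using A R1 R2 by (simp add: backward_safe_def)
      have s2: "safe_elem X2 (g2 \<circ> f2) y" using A R1 R2 by (simp add: backward_safe_def)
      have "supp X1 x \<inter> supp X2 y \<subseteq> supp W1 ((g1 \<circ> f1) x) \<inter> supp W2 ((g2 \<circ> f2) y)"
        using R1 R2 by auto
      thus "safe_elem (prod_nom X1 X2) (map_prod g1 g2 \<circ> map_prod f1 f2) u"
        using Pgf s1 s2 uxy comp by simp
    qed
  qed
qed




lemma safe_elemD: "safe_elem X f u \<Longrightarrow> v \<in> carrier X \<Longrightarrow> f v = f u \<Longrightarrow> card (supp X v) \<le> card (supp X u)"
  unfolding safe_elem_def by simp
lemma fwdD: "forward_safe X Y W f g \<Longrightarrow> safe_elem X (g \<circ> f) u \<Longrightarrow> safe_elem Y g (f u)"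
  unfolding forward_safe_def by simp
lemma bwdD: "backward_safe X Y W f g \<Longrightarrow> safe_elem X f u \<Longrightarrow> safe_elem Y g (f u) \<Longrightarrow> safe_elem X (g \<circ> f) u"
  unfolding backward_safe_def by simp
lemma fwd_maps: "forward_safe X Y W f g \<Longrightarrow> safe_map X Y f \<and> safe_map Y W g"
  unfolding forward_safe_def by simp
lemma bwd_maps: "backward_safe X Y W f g \<Longrightarrow> safe_map X Y f \<and> safe_map Y W g"
  unfolding backward_safe_def by simp

section \<open>Coproducts\<close>

lemma coprod_carrier[simp]: "carrier (coprod_nom I X) = Sigma I (\<lambda>i. carrier (X i))"
  by (simp add: coprod_nom_def)
lemma coprod_act[simp]: "act (coprod_nom I X) p (i, x) = (i, act (X i) p x)"
  by (simp add: coprod_nom_def)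
lemma coprod_map_simp[simp]: "coprod_map f (i, x) = (i, f i x)"
  by (simp add: coprod_map_def)

lemma supp_coprod: "supp (coprod_nom I X) (i, x) = supp (X i) x"
  unfolding supp_def supports_def by simp

lemma coprod_safe_iff:
  "safe_elem (coprod_nom I X) (coprod_map h) (i, x) \<longleftrightarrow> i \<in> I \<and> safe_elem (X i) (h i) x"
proof
  assume S: "safe_elem (coprod_nom I X) (coprod_map h) (i, x)"
  hence i: "i \<in> I" and x: "x \<in> carrier (X i)" by (auto simp: safe_elem_def)
  have "\<forall>v\<in>carrier (X i). h i v = h i x \<longrightarrow> card (supp (X i) v) \<le> card (supp (X i) x)"
  proof (intro ballI impI)
    fix v assume v: "v \<in> carrier (X i)" and hv: "h i v = h i x"
    have "(i, v) \<in> carrier (coprod_nom I X)" using i v by simp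
    moreover have "coprod_map h (i, v) = coprod_map h (i, x)" using hv by simp
    ultimately have "card (supp (coprod_nom I X) (i, v)) \<le> card (supp (coprod_nom I X) (i, x))"
      using safe_elemD[OF S] by simp
    thus "card (supp (X i) v) \<le> card (supp (X i) x)" by (simp add: supp_coprod)
  qed
  thus "i \<in> I \<and> safe_elem (X i) (h i) x" using i x by (simp add: safe_elem_def)
next
  assume R: "i \<in> I \<and> safe_elem (X i) (h i) x"
  show "safe_elem (coprod_nom I X) (coprod_map h) (i, x)"
    unfolding safe_elem_def
  proof (intro conjI ballI impI)
    show "(i, x) \<in> carrier (coprod_nom I X)" using R by (simp add: safe_elem_def)
  next
    fix w assume w: "w \<in> carrier (coprod_nom I X)" and hw: "coprod_map h w = coprod_map h (i, x)"
    obtain j v where wv: "w = (j, v)" by (cases w)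
    have ji: "j = i" and hv: "h i v = h i x" using hw wv by auto
    have v: "v \<in> carrier (X i)" using w wv ji by simp
    have "card (supp (X i) v) \<le> card (supp (X i) x)" using R v hv by (simp add: safe_elem_def)
    thus "card (supp (coprod_nom I X) w) \<le> card (supp (coprod_nom I X) (i, x))"
      using wv ji by (simp add: supp_coprod)
  qed
qed

lemma coprod_safe_map:
  assumes "\<forall>i\<in>I. safe_map (X i) (Y i) (h i)"
  shows "safe_map (coprod_nom I X) (coprod_nom I Y) (coprod_map h)"
  unfolding safe_map_def
proof
  fix z assume z: "z \<in> carrier (coprod_nom I Y)"
  obtain i y where zz: "z = (i, y)" by (cases z)
  have i: "i \<in> I" and y: "y \<in> carrier (Y i)" using z zz by auto
  have "safe_map (X i) (Y i) (h i)" using assms i by simp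
  hence "\<exists>u. safe_elem (X i) (h i) u \<and> h i u = y" using y unfolding safe_map_def by simp
  then obtain u where u: "safe_elem (X i) (h i) u" "h i u = y" by (elim exE conjE)
  have "safe_elem (coprod_nom I X) (coprod_map h) (i, u)" using coprod_safe_iff[of I X h i u] i u(1) by simp
  moreover have "coprod_map h (i, u) = z" using zz u(2) by simp
  ultimately show "\<exists>u. safe_elem (coprod_nom I X) (coprod_map h) u \<and> coprod_map h u = z" by blast
qed

lemma part2:
  "((\<forall>i\<in>I. forward_safe (X i) (Y i) (W i) (f i) (g i)) \<longrightarrow>
         forward_safe (coprod_nom I X) (coprod_nom I Y) (coprod_nom I W)
           (coprod_map f) (coprod_map g)) \<and>
      ((\<forall>i\<in>I. backward_safe (X i) (Y i) (W i) (f i) (g i)) \<longrightarrow>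
         backward_safe (coprod_nom I X) (coprod_nom I Y) (coprod_nom I W)
           (coprod_map f) (coprod_map g))"
proof -
  have comp: "coprod_map g \<circ> coprod_map f = coprod_map (\<lambda>i. g i \<circ> f i)"
    by (simp add: fun_eq_iff coprod_map_def split: prod.splits)
  show ?thesis
  proof (intro conjI impI)
    assume A: "\<forall>i\<in>I. forward_safe (X i) (Y i) (W i) (f i) (g i)"
    show "forward_safe (coprod_nom I X) (coprod_nom I Y) (coprod_nom I W) (coprod_map f) (coprod_map g)"
      unfolding forward_safe_def
    proof (intro conjI allI impI)
      show "safe_map (coprod_nom I X) (coprod_nom I Y) (coprod_map f)"
        using A by (intro coprod_safe_map) (auto dest: fwd_maps)
      show "safe_map (coprod_nom I Y) (coprod_nom I W) (coprod_map g)"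
        using A by (intro coprod_safe_map) (auto dest: fwd_maps)
    next
      fix u assume u: "safe_elem (coprod_nom I X) (coprod_map g \<circ> coprod_map f) u"
      obtain i x where ux: "u = (i, x)" by (cases u)
      have R: "i \<in> I \<and> safe_elem (X i) (g i \<circ> f i) x"
        using u ux comp coprod_safe_iff[of I X "\<lambda>i. g i \<circ> f i" i x] by simp
      hence "safe_elem (Y i) (g i) (f i x)" using fwdD[of "X i" "Y i" "W i" "f i" "g i" x] A by simp
      thus "safe_elem (coprod_nom I Y) (coprod_map g) (coprod_map f u)"
        using R ux coprod_safe_iff[of I Y g i "f i x"] by simp
    qed
  next
    assume A: "\<forall>i\<in>I. backward_safe (X i) (Y i) (W i) (f i) (g i)"
    show "backward_safe (coprod_nom I X) (coprod_nom I Y) (coprod_nom I W) (coprod_map f) (coprod_map g)"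
      unfolding backward_safe_def
    proof (intro conjI allI impI)
      show "safe_map (coprod_nom I X) (coprod_nom I Y) (coprod_map f)"
        using A by (intro coprod_safe_map) (auto dest: bwd_maps)
      show "safe_map (coprod_nom I Y) (coprod_nom I W) (coprod_map g)"
        using A by (intro coprod_safe_map) (auto dest: bwd_maps)
    next
      fix u assume u: "safe_elem (coprod_nom I X) (coprod_map f) u \<and>
        safe_elem (coprod_nom I Y) (coprod_map g) (coprod_map f u)"
      obtain i x where ux: "u = (i, x)" by (cases u)
      have R1: "i \<in> I \<and> safe_elem (X i) (f i) x" using u ux coprod_safe_iff[of I X f i x] by simp
      have R2: "safe_elem (Y i) (g i) (f i x)" using u ux coprod_safe_iff[of I Y g i "f i x"] by simp
      have "safe_elem (X i) (g i \<circ> f i) x" using bwdD[of "X i" "Y i" "W i" "f i" "g i" x] A R1 R2 by simp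
      thus "safe_elem (coprod_nom I X) (coprod_map g \<circ> coprod_map f) u"
        using R1 ux comp coprod_safe_iff[of I X "\<lambda>i. g i \<circ> f i" i x] by simp
    qed
  qed
qed




lemma names_carrier[simp]: "carrier names_nom = UNIV" by (simp add: names_nom_def)
lemma names_act[simp]: "act names_nom p a = p a" by (simp add: names_nom_def)
lemma names_map_simp[simp]: "names_map f (a, x) = (a, f x)" by (simp add: names_map_def)
lemma theta_simp[simp]: "theta W (a, x) = nabs W a x" by (simp add: theta_def)
lemma abs_carrier: "carrier (abs_nom W) = {nabs W a x | a x. x \<in> carrier W}" by (simp add: abs_nom_def)

lemma supports_name: "supports names_nom {a} a" unfolding supports_def by simp

lemma supp_name: "supp names_nom a = {a}"
proof
  show "supp names_nom a \<subseteq> {a}" by (rule supp_least) (simp_all add: supports_name)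
  show "{a} \<subseteq> supp names_nom a" unfolding supp_def
  proof (rule Inter_greatest)
    fix A assume A: "A \<in> {A. finite A \<and> supports names_nom A a}"
    show "{a} \<subseteq> A"
    proof (rule ccontr)
      assume "\<not> {a} \<subseteq> A" hence aA: "a \<notin> A" by simp
      have fA: "finite (insert a A)" using A by simp
      from fresh_nat[OF fA] obtain b where b: "b \<notin> insert a A" ..
      have sA: "supports names_nom A a" using A by simp
      have "act names_nom (swp a b) a = a" using swap_fix[OF sA aA] b by simp
      thus False using b by (simp add: swp_def)
    qed
  qed
qed

lemma supp_nx:
  assumes nom: "nominal X" and x: "x \<in> carrier X"
  shows "supp (prod_nom names_nom X) (a, x) = insert a (supp X x)"
proof -
  have f1: "finite (supp names_nom a)" by (simp add: supp_name)
  have s1: "supports names_nom (supp names_nom a) a" by (simp add: supp_name supports_name)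
  show ?thesis using supp_prod[OF f1 s1 supp_fin[OF nom x] supp_supports[OF nom x]]
    by (simp add: supp_name)
qed

lemma rename_away:
  assumes nomX: "nominal X" and nomY: "nominal Y" and h: "equivariant X Y h" and x: "x \<in> carrier X"
  shows "\<exists>x'\<in>carrier X. h x' = h x \<and> card (supp X x') = card (supp X x) \<and>
           (a \<in> supp X x' \<longrightarrow> a \<in> supp Y (h x))"
proof -
  obtain x' where x': "x' \<in> carrier X" "h x' = h x" "card (supp X x') = card (supp X x)"
    "supp X x' \<inter> {a} \<subseteq> supp Y (h x)"
    using rename[OF nomX nomY h x, of "{a}"] by auto
  thus ?thesis by blast
qed

lemma nx_safe_D:
  assumes nomX: "nominal X" and nomZ: "nominal Z" and h: "equivariant X Z h"
    and K: "\<And>v. v \<in> carrier X \<Longrightarrow> h v = h x \<Longrightarrow> K (a, v) = K (a, x)"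
    and S: "safe_elem (prod_nom names_nom X) K (a, x)"
  shows "safe_elem X h x \<and> (a \<in> supp Z (h x) \<or> a \<notin> supp X x)"
proof -
  have x: "x \<in> carrier X" using S by (simp add: safe_elem_def)
  have fx: "finite (supp X x)" using supp_fin[OF nomX x] .
  have hsub: "supp Z (h x) \<subseteq> supp X x" using supp_equivariant[OF nomX h x] .
  have G: "\<exists>v'. finite (supp X v') \<and> card (supp X v') = card (supp X v) \<and> (a \<in> supp X v' \<longrightarrow> a \<in> supp Z (h x))
      \<and> card (insert a (supp X v')) \<le> card (insert a (supp X x))"
    if v: "v \<in> carrier X" and hv: "h v = h x" for v
  proof -
    obtain v' where v': "v' \<in> carrier X" "h v' = h v" "card (supp X v') = card (supp X v)"
      "a \<in> supp X v' \<longrightarrow> a \<in> supp Z (h v)"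
      using rename_away[OF nomX nomZ h v, of a] by blast
    have "card (supp (prod_nom names_nom X) (a, v')) \<le> card (supp (prod_nom names_nom X) (a, x))"
      using safe_elemD[OF S, of "(a, v')"] v'(1,2) hv K[of v'] by simp
    hence "card (insert a (supp X v')) \<le> card (insert a (supp X x))"
      using supp_nx[OF nomX v'(1)] supp_nx[OF nomX x] by simp
    thus ?thesis using v' hv supp_fin[OF nomX v'(1)] by auto
  qed
  have safe: "safe_elem X h x" unfolding safe_elem_def
  proof (intro conjI ballI impI x)
    fix v assume v: "v \<in> carrier X" and hv: "h v = h x"
    show "card (supp X v) \<le> card (supp X x)"
    proof (rule ccontr)
      assume "\<not> card (supp X v) \<le> card (supp X x)"
      hence lt: "card (supp X x) < card (supp X v)" by simp
      obtain v' where v': "finite (supp X v')" "card (supp X v') = card (supp X v)"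
        "a \<in> supp X v' \<longrightarrow> a \<in> supp Z (h x)" "card (insert a (supp X v')) \<le> card (insert a (supp X x))"
        using G[OF v hv] by blast
      show False
      proof (cases "a \<in> supp Z (h x)")
        case True
        hence "a \<in> supp X x" using hsub by blast
        hence "card (insert a (supp X x)) = card (supp X x)" by (simp add: insert_absorb)
        moreover have "card (supp X v') \<le> card (insert a (supp X v'))" by (rule card_insert_le)
        ultimately show False using v'(2,4) lt by linarith
      next
        case False
        hence "a \<notin> supp X v'" using v'(3) by blast
        hence "card (insert a (supp X v')) = Suc (card (supp X v'))" using v'(1) by simp
        moreover have "card (insert a (supp X x)) \<le> Suc (card (supp X x))" using fx by (simp add: card_insert_if)
        ultimately show False using v'(2,4) lt by linarith
      qed
    qed
  qed
  moreover have "a \<in> supp Z (h x) \<or> a \<notin> supp X x"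
  proof (rule ccontr)
    assume "\<not> (a \<in> supp Z (h x) \<or> a \<notin> supp X x)"
    hence a1: "a \<notin> supp Z (h x)" and a2: "a \<in> supp X x" by auto
    obtain v' where v': "finite (supp X v')" "card (supp X v') = card (supp X x)"
        "a \<in> supp X v' \<longrightarrow> a \<in> supp Z (h x)" "card (insert a (supp X v')) \<le> card (insert a (supp X x))"
      using G[OF x refl] by blast
    have "a \<notin> supp X v'" using v'(3) a1 by blast
    hence "card (insert a (supp X v')) = Suc (card (supp X v'))" using v'(1) by simp
    moreover have "card (insert a (supp X x)) = card (supp X x)" using a2 by (simp add: insert_absorb)
    ultimately show False using v'(2,4) by linarith
  qed
  ultimately show ?thesis by blast
qed

lemma nm_safe:
  assumes nomX: "nominal X" and nomY: "nominal Y" and f: "equivariant X Y f"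
    and S: "safe_elem X f x" and c: "a \<in> supp Y (f x) \<or> a \<notin> supp X x"
  shows "safe_elem (prod_nom names_nom X) (names_map f) (a, x)"
  unfolding safe_elem_def
proof (intro conjI ballI impI)
  have x: "x \<in> carrier X" using S by (simp add: safe_elem_def)
  thus "(a, x) \<in> carrier (prod_nom names_nom X)" by simp
  fix w assume w: "w \<in> carrier (prod_nom names_nom X)" and hw: "names_map f w = names_map f (a, x)"
  obtain b v where wv: "w = (b, v)" by (cases w)
  have v: "v \<in> carrier X" using w wv by simp
  have ba: "b = a" and fv: "f v = f x" using hw wv by auto
  have cv: "card (supp X v) \<le> card (supp X x)" using safe_elemD[OF S v fv] .
  have fsx: "finite (supp X x)" using supp_fin[OF nomX x] .
  have fsv: "finite (supp X v)" using supp_fin[OF nomX v] .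
  have "card (insert a (supp X v)) \<le> card (insert a (supp X x))"
  proof (cases "a \<in> supp Y (f x)")
    case True
    hence "a \<in> supp X v" using supp_equivariant[OF nomX f v] fv by auto
    moreover have "a \<in> supp X x" using True supp_equivariant[OF nomX f x] by auto
    ultimately show ?thesis using cv by (simp add: insert_absorb)
  next
    case False
    hence "a \<notin> supp X x" using c by blast
    hence "card (insert a (supp X x)) = Suc (card (supp X x))" using fsx by simp
    moreover have "card (insert a (supp X v)) \<le> Suc (card (supp X v))" using fsv by (simp add: card_insert_if)
    ultimately show ?thesis using cv by linarith
  qed
  thus "card (supp (prod_nom names_nom X) w) \<le> card (supp (prod_nom names_nom X) (a, x))"
    using wv ba supp_nx[OF nomX v] supp_nx[OF nomX x] by simp
qed

lemma nabs_refl: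
  assumes nom: "nominal W" and w: "w \<in> carrier W"
  shows "(b, w) \<in> nabs W b w"
proof -
  have "finite (insert b (supp W w))" using supp_fin[OF nom w] by simp
  from fresh_nat[OF this] obtain c where c: "c \<notin> insert b (supp W w)" ..
  have "w \<in> carrier W \<and> (\<exists>c'. c' \<noteq> b \<and> c' \<noteq> b \<and> c' \<notin> supp W w \<and> c' \<notin> supp W w \<and>
      act W (swp b c') w = act W (swp b c') w)" using w c by blast
  thus ?thesis unfolding nabs_def by simp
qed

lemma nabs_D:
  "(b, y) \<in> nabs W a x \<Longrightarrow> y \<in> carrier W \<and> (\<exists>c. c \<noteq> a \<and> c \<noteq> b \<and> c \<notin> supp W x \<and> c \<notin> supp W y \<and>
      act W (swp a c) x = act W (swp b c) y)"
  unfolding nabs_def by simp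

lemma H_safe:
  assumes nomX: "nominal X" and nomW: "nominal W" and h: "equivariant X W h"
    and S: "safe_elem X h x" and cnd: "a \<in> supp W (h x) \<or> a \<notin> supp X x"
  shows "safe_elem (prod_nom names_nom X) (theta W \<circ> names_map h) (a, x)"
  unfolding safe_elem_def
proof (intro conjI ballI impI)
  have x: "x \<in> carrier X" using S by (simp add: safe_elem_def)
  thus "(a, x) \<in> carrier (prod_nom names_nom X)" by simp
  fix w assume w: "w \<in> carrier (prod_nom names_nom X)"
    and hw: "(theta W \<circ> names_map h) w = (theta W \<circ> names_map h) (a, x)"
  obtain b v where wv: "w = (b, v)" by (cases w)
  have v: "v \<in> carrier X" using w wv by simp
  have eq: "nabs W b (h v) = nabs W a (h x)" using hw wv by simp
  have hv: "h v \<in> carrier W" using equiv_closed[OF h v] .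
  have hx: "h x \<in> carrier W" using equiv_closed[OF h x] .
  have "(b, h v) \<in> nabs W a (h x)" using nabs_refl[OF nomW hv, of b] eq by simp
  from conjunct2[OF nabs_D[OF this]] obtain c where c: "c \<noteq> a" "c \<noteq> b" "c \<notin> supp W (h x)" "c \<notin> supp W (h v)"
    "act W (swp a c) (h x) = act W (swp b c) (h v)"
    by blast
  define v1 where "v1 = act X (swp b c) v"
  define v2 where "v2 = act X (swp a c) v1"
  have v1: "v1 \<in> carrier X" using nom_closed[OF nomX fperm_swp v] v1_def by simp
  have v2: "v2 \<in> carrier X" using nom_closed[OF nomX fperm_swp v1] v2_def by simp
  have "h v2 = act W (swp a c) (h v1)" using equiv_act[OF h fperm_swp v1] v2_def by simp
  also have "\<dots> = act W (swp a c) (act W (swp b c) (h v))" using equiv_act[OF h fperm_swp v] v1_def by simp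
  also have "\<dots> = act W (swp a c) (act W (swp a c) (h x))" using c(5) by simp
  also have "\<dots> = act W (swp a c \<circ> swp a c) (h x)" using nom_comp[OF nomW fperm_swp fperm_swp hx] by simp
  also have "\<dots> = h x" using nom_id[OF nomW hx] by (simp add: swp_comp_self)
  finally have hv2: "h v2 = h x" .
  have "card (supp X v2) = card (supp X v)"
    using card_supp_act[OF nomX fperm_swp v1] card_supp_act[OF nomX fperm_swp v] v1_def v2_def by simp
  hence cv: "card (supp X v) \<le> card (supp X x)" using safe_elemD[OF S v2 hv2] by simp
  have fsx: "finite (supp X x)" using supp_fin[OF nomX x] .
  have fsv: "finite (supp X v)" using supp_fin[OF nomX v] .
  have "card (insert b (supp X v)) \<le> card (insert a (supp X x))"
  proof (cases "a \<in> supp W (h x)")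
    case True
    have ca: "c = swp a c a" by (simp add: swp_def)
    have c1: "c \<in> swp a c ` supp W (h x)" using ca True by (rule image_eqI[of c "swp a c" a])
    have S1: "supp W (act W (swp a c) (h x)) = swp a c ` supp W (h x)" by (rule supp_act[OF nomW fperm_swp hx])
    have S2: "supp W (act W (swp b c) (h v)) = swp b c ` supp W (h v)" by (rule supp_act[OF nomW fperm_swp hv])
    have "c \<in> swp b c ` supp W (h v)" using c1 unfolding S2[symmetric] S1[symmetric] c(5) .
    then obtain y where y: "c = swp b c y" "y \<in> supp W (h v)" by (rule imageE)
    have "y = b" using y(1) c(2) by (simp add: swp_def split: if_splits)
    hence "b \<in> supp X v" using y(2) supp_equivariant[OF nomX h v] by auto
    moreover have "a \<in> supp X x" using True supp_equivariant[OF nomX h x] by auto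
    ultimately show ?thesis using cv by (simp add: insert_absorb)
  next
    case False
    hence "a \<notin> supp X x" using cnd by blast
    hence "card (insert a (supp X x)) = Suc (card (supp X x))" using fsx by simp
    moreover have "card (insert b (supp X v)) \<le> Suc (card (supp X v))" using fsv by (simp add: card_insert_if)
    ultimately show ?thesis using cv by linarith
  qed
  thus "card (supp (prod_nom names_nom X) w) \<le> card (supp (prod_nom names_nom X) (a, x))"
    using wv supp_nx[OF nomX v] supp_nx[OF nomX x] by simp
qed




lemma nm_safe_map:
  assumes nomX: "nominal X" and nomY: "nominal Y" and f: "equivariant X Y f" and sm: "safe_map X Y f"
  shows "safe_map (prod_nom names_nom X) (prod_nom names_nom Y) (names_map f)"
  unfolding safe_map_def
proof
  fix z assume z: "z \<in> carrier (prod_nom names_nom Y)"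
  obtain a y where zz: "z = (a, y)" by (cases z)
  have y: "y \<in> carrier Y" using z zz by simp
  have "\<exists>x. safe_elem X f x \<and> f x = y" using sm y unfolding safe_map_def by simp
  then obtain x where x: "safe_elem X f x" "f x = y" by (elim exE conjE)
  have cx: "x \<in> carrier X" using x(1) by (simp add: safe_elem_def)
  obtain x' where x': "x' \<in> carrier X" "f x' = f x" "card (supp X x') = card (supp X x)"
    "a \<in> supp X x' \<longrightarrow> a \<in> supp Y (f x)"
    using rename_away[OF nomX nomY f cx, of a] by blast
  have sx': "safe_elem X f x'" using safe_elem_rename[OF x(1) x'(1-3)] .
  have "a \<in> supp Y (f x') \<or> a \<notin> supp X x'" using x'(2,4) by auto
  hence "safe_elem (prod_nom names_nom X) (names_map f) (a, x')" using nm_safe[OF nomX nomY f sx'] by simp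
  moreover have "names_map f (a, x') = z" using zz x(2) x'(2) by simp
  ultimately show "\<exists>u. safe_elem (prod_nom names_nom X) (names_map f) u \<and> names_map f u = z" by blast
qed

lemma H_safe_map:
  assumes nomY: "nominal Y" and nomW: "nominal W" and g: "equivariant Y W g" and sm: "safe_map Y W g"
  shows "safe_map (prod_nom names_nom Y) (abs_nom W) (theta W \<circ> names_map g)"
  unfolding safe_map_def
proof
  fix S assume "S \<in> carrier (abs_nom W)"
  then obtain a w where Sw: "S = nabs W a w" and w: "w \<in> carrier W" unfolding abs_carrier by blast
  have "\<exists>y. safe_elem Y g y \<and> g y = w" using sm w unfolding safe_map_def by simp
  then obtain y where y: "safe_elem Y g y" "g y = w" by (elim exE conjE)
  have cy: "y \<in> carrier Y" using y(1) by (simp add: safe_elem_def)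
  obtain y' where y': "y' \<in> carrier Y" "g y' = g y" "card (supp Y y') = card (supp Y y)"
    "a \<in> supp Y y' \<longrightarrow> a \<in> supp W (g y)"
    using rename_away[OF nomY nomW g cy, of a] by blast
  have sy': "safe_elem Y g y'" using safe_elem_rename[OF y(1) y'(1-3)] .
  have "a \<in> supp W (g y') \<or> a \<notin> supp Y y'" using y'(2,4) by auto
  hence "safe_elem (prod_nom names_nom Y) (theta W \<circ> names_map g) (a, y')"
    using H_safe[OF nomY nomW g sy'] by simp
  moreover have "(theta W \<circ> names_map g) (a, y') = S" using Sw y(2) y'(2) by simp
  ultimately show "\<exists>u. safe_elem (prod_nom names_nom Y) (theta W \<circ> names_map g) u \<and>
      (theta W \<circ> names_map g) u = S" by blast
qed

lemma part3:
  assumes nX: "nominal X'" and nY: "nominal Y'" and nW: "nominal W'"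
    and f: "equivariant X' Y' f'" and g: "equivariant Y' W' g'"
  shows "(forward_safe X' Y' W' f' g' \<longrightarrow>
         forward_safe (prod_nom names_nom X') (prod_nom names_nom Y') (abs_nom W')
           (names_map f') (theta W' \<circ> names_map g')) \<and>
      (backward_safe X' Y' W' f' g' \<longrightarrow>
         backward_safe (prod_nom names_nom X') (prod_nom names_nom Y') (abs_nom W')
           (names_map f') (theta W' \<circ> names_map g'))"
proof -
  have comp: "(theta W' \<circ> names_map g') \<circ> names_map f' = theta W' \<circ> names_map (g' \<circ> f')"
    by (simp add: fun_eq_iff names_map_def theta_def split: prod.splits)
  have gf: "equivariant X' W' (g' \<circ> f')" using equivariant_comp[OF f g] .
  show ?thesis
  proof (intro conjI impI)
    assume A: "forward_safe X' Y' W' f' g'"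
    have m: "safe_map X' Y' f' \<and> safe_map Y' W' g'" using fwd_maps[OF A] .
    show "forward_safe (prod_nom names_nom X') (prod_nom names_nom Y') (abs_nom W')
           (names_map f') (theta W' \<circ> names_map g')"
      unfolding forward_safe_def
    proof (intro conjI allI impI)
      show "safe_map (prod_nom names_nom X') (prod_nom names_nom Y') (names_map f')"
        using nm_safe_map[OF nX nY f] m by simp
      show "safe_map (prod_nom names_nom Y') (abs_nom W') (theta W' \<circ> names_map g')"
        using H_safe_map[OF nY nW g] m by simp
    next
      fix u assume u: "safe_elem (prod_nom names_nom X') ((theta W' \<circ> names_map g') \<circ> names_map f') u"
      obtain a x where ux: "u = (a, x)" by (cases u)
      have u': "safe_elem (prod_nom names_nom X') (theta W' \<circ> names_map (g' \<circ> f')) (a, x)"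
        using u ux comp by simp
      have R: "safe_elem X' (g' \<circ> f') x \<and> (a \<in> supp W' ((g' \<circ> f') x) \<or> a \<notin> supp X' x)"
        by (rule nx_safe_D[OF nX nW gf _ u']) simp
      have x: "x \<in> carrier X'" using R by (simp add: safe_elem_def)
      have s1: "safe_elem Y' g' (f' x)" using fwdD[OF A] R by blast
      have "a \<in> supp W' (g' (f' x)) \<or> a \<notin> supp Y' (f' x)"
        using R supp_equivariant[OF nX f x] by auto
      hence "safe_elem (prod_nom names_nom Y') (theta W' \<circ> names_map g') (a, f' x)"
        using H_safe[OF nY nW g s1] by simp
      thus "safe_elem (prod_nom names_nom Y') (theta W' \<circ> names_map g') (names_map f' u)"
        using ux by simp
    qed
  next
    assume A: "backward_safe X' Y' W' f' g'"
    have m: "safe_map X' Y' f' \<and> safe_map Y' W' g'" using bwd_maps[OF A] .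
    show "backward_safe (prod_nom names_nom X') (prod_nom names_nom Y') (abs_nom W')
           (names_map f') (theta W' \<circ> names_map g')"
      unfolding backward_safe_def
    proof (intro conjI allI impI)
      show "safe_map (prod_nom names_nom X') (prod_nom names_nom Y') (names_map f')"
        using nm_safe_map[OF nX nY f] m by simp
      show "safe_map (prod_nom names_nom Y') (abs_nom W') (theta W' \<circ> names_map g')"
        using H_safe_map[OF nY nW g] m by simp
    next
      fix u assume u: "safe_elem (prod_nom names_nom X') (names_map f') u \<and>
        safe_elem (prod_nom names_nom Y') (theta W' \<circ> names_map g') (names_map f' u)"
      obtain a x where ux: "u = (a, x)" by (cases u)
      have u1: "safe_elem (prod_nom names_nom X') (names_map f') (a, x)" using u ux by simp
      have u2: "safe_elem (prod_nom names_nom Y') (theta W' \<circ> names_map g') (a, f' x)" using u ux by simp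
      have R1: "safe_elem X' f' x \<and> (a \<in> supp Y' (f' x) \<or> a \<notin> supp X' x)"
        by (rule nx_safe_D[OF nX nY f _ u1]) simp
      have R2: "safe_elem Y' g' (f' x) \<and> (a \<in> supp W' (g' (f' x)) \<or> a \<notin> supp Y' (f' x))"
        by (rule nx_safe_D[OF nY nW g _ u2]) simp
      have s: "safe_elem X' (g' \<circ> f') x" using bwdD[OF A] R1 R2 by blast
      have "a \<in> supp W' ((g' \<circ> f') x) \<or> a \<notin> supp X' x" using R1 R2 by auto
      hence "safe_elem (prod_nom names_nom X') (theta W' \<circ> names_map (g' \<circ> f')) (a, x)"
        using H_safe[OF nX nW gf s] by simp
      thus "safe_elem (prod_nom names_nom X') ((theta W' \<circ> names_map g') \<circ> names_map f') u"
        using ux comp by simp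
    qed
  qed
qed



lemma part1':
  "(nominal X1 \<and> nominal Y1 \<and> nominal W1 \<and> nominal X2 \<and> nominal Y2 \<and> nominal W2 \<and>
    equivariant X1 Y1 f1 \<and> equivariant Y1 W1 g1 \<and>
    equivariant X2 Y2 f2 \<and> equivariant Y2 W2 g2 \<longrightarrow>
      (forward_safe X1 Y1 W1 f1 g1 \<and> forward_safe X2 Y2 W2 f2 g2 \<longrightarrow>
         forward_safe (prod_nom X1 X2) (prod_nom Y1 Y2) (prod_nom W1 W2)
           (map_prod f1 f2) (map_prod g1 g2)) \<and>
      (backward_safe X1 Y1 W1 f1 g1 \<and> backward_safe X2 Y2 W2 f2 g2 \<longrightarrow>
         backward_safe (prod_nom X1 X2) (prod_nom Y1 Y2) (prod_nom W1 W2)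
           (map_prod f1 f2) (map_prod g1 g2)))"
proof
  assume H: "nominal X1 \<and> nominal Y1 \<and> nominal W1 \<and> nominal X2 \<and> nominal Y2 \<and> nominal W2 \<and>
    equivariant X1 Y1 f1 \<and> equivariant Y1 W1 g1 \<and>
    equivariant X2 Y2 f2 \<and> equivariant Y2 W2 g2"
  from H show "(forward_safe X1 Y1 W1 f1 g1 \<and> forward_safe X2 Y2 W2 f2 g2 \<longrightarrow>
         forward_safe (prod_nom X1 X2) (prod_nom Y1 Y2) (prod_nom W1 W2)
           (map_prod f1 f2) (map_prod g1 g2)) \<and>
      (backward_safe X1 Y1 W1 f1 g1 \<and> backward_safe X2 Y2 W2 f2 g2 \<longrightarrow>
         backward_safe (prod_nom X1 X2) (prod_nom Y1 Y2) (prod_nom W1 W2)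
           (map_prod f1 f2) (map_prod g1 g2))"
    by (elim conjE) (rule part1)
qed

lemma part2':
  "((\<forall>i\<in>I. nominal (X i) \<and> nominal (Y i) \<and> nominal (W i) \<and>
            equivariant (X i) (Y i) (f i) \<and> equivariant (Y i) (W i) (g i)) \<longrightarrow>
      ((\<forall>i\<in>I. forward_safe (X i) (Y i) (W i) (f i) (g i)) \<longrightarrow>
         forward_safe (coprod_nom I X) (coprod_nom I Y) (coprod_nom I W)
           (coprod_map f) (coprod_map g)) \<and>
      ((\<forall>i\<in>I. backward_safe (X i) (Y i) (W i) (f i) (g i)) \<longrightarrow>
         backward_safe (coprod_nom I X) (coprod_nom I Y) (coprod_nom I W)
           (coprod_map f) (coprod_map g)))"
  by (intro impI) (rule part2)

lemma part3':
  "(nominal X' \<and> nominal Y' \<and> nominal W' \<and>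
    equivariant X' Y' f' \<and> equivariant Y' W' g' \<longrightarrow>
      (forward_safe X' Y' W' f' g' \<longrightarrow>
         forward_safe (prod_nom names_nom X') (prod_nom names_nom Y') (abs_nom W')
           (names_map f') (theta W' \<circ> names_map g')) \<and>
      (backward_safe X' Y' W' f' g' \<longrightarrow>
         backward_safe (prod_nom names_nom X') (prod_nom names_nom Y') (abs_nom W')
           (names_map f') (theta W' \<circ> names_map g')))"
proof
  assume H: "nominal X' \<and> nominal Y' \<and> nominal W' \<and>
    equivariant X' Y' f' \<and> equivariant Y' W' g'"
  from H show "(forward_safe X' Y' W' f' g' \<longrightarrow>
         forward_safe (prod_nom names_nom X') (prod_nom names_nom Y') (abs_nom W')
           (names_map f') (theta W' \<circ> names_map g')) \<and>
      (backward_safe X' Y' W' f' g' \<longrightarrow>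
         backward_safe (prod_nom names_nom X') (prod_nom names_nom Y') (abs_nom W')
           (names_map f') (theta W' \<circ> names_map g'))"
    by (elim conjE) (rule part3)
qed

theorem lemma5p42:
  shows
  \<comment> \<open>(1) products\<close>
  "(nominal X1 \<and> nominal Y1 \<and> nominal W1 \<and> nominal X2 \<and> nominal Y2 \<and> nominal W2 \<and>
    equivariant X1 Y1 f1 \<and> equivariant Y1 W1 g1 \<and>
    equivariant X2 Y2 f2 \<and> equivariant Y2 W2 g2 \<longrightarrow>
      (forward_safe X1 Y1 W1 f1 g1 \<and> forward_safe X2 Y2 W2 f2 g2 \<longrightarrow>
         forward_safe (prod_nom X1 X2) (prod_nom Y1 Y2) (prod_nom W1 W2)
           (map_prod f1 f2) (map_prod g1 g2)) \<and>
      (backward_safe X1 Y1 W1 f1 g1 \<and> backward_safe X2 Y2 W2 f2 g2 \<longrightarrow>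
         backward_safe (prod_nom X1 X2) (prod_nom Y1 Y2) (prod_nom W1 W2)
           (map_prod f1 f2) (map_prod g1 g2)))
   \<and>
  \<comment> \<open>(2) coproducts over an index set I\<close>
   ((\<forall>i\<in>I. nominal (X i) \<and> nominal (Y i) \<and> nominal (W i) \<and>
            equivariant (X i) (Y i) (f i) \<and> equivariant (Y i) (W i) (g i)) \<longrightarrow>
      ((\<forall>i\<in>I. forward_safe (X i) (Y i) (W i) (f i) (g i)) \<longrightarrow>
         forward_safe (coprod_nom I X) (coprod_nom I Y) (coprod_nom I W)
           (coprod_map f) (coprod_map g)) \<and>
      ((\<forall>i\<in>I. backward_safe (X i) (Y i) (W i) (f i) (g i)) \<longrightarrow>
         backward_safe (coprod_nom I X) (coprod_nom I Y) (coprod_nom I W)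
           (coprod_map f) (coprod_map g)))
   \<and>
  \<comment> \<open>(3) V x f and theta_W o (V x g)\<close>
   (nominal X' \<and> nominal Y' \<and> nominal W' \<and>
    equivariant X' Y' f' \<and> equivariant Y' W' g' \<longrightarrow>
      (forward_safe X' Y' W' f' g' \<longrightarrow>
         forward_safe (prod_nom names_nom X') (prod_nom names_nom Y') (abs_nom W')
           (names_map f') (theta W' \<circ> names_map g')) \<and>
      (backward_safe X' Y' W' f' g' \<longrightarrow>
         backward_safe (prod_nom names_nom X') (prod_nom names_nom Y') (abs_nom W')
           (names_map f') (theta W' \<circ> names_map g')))"
    apply (intro conjI)
    apply (rule part1')
   apply (rule part2')
  apply (rule part3')
  done

end
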